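(* Let $\{\lambda_j\}_{j\in\mathbb N}$ be a non-increasing sequence of non-negative reals with $\lambda_1=1$ and $\lim_{j\to\infty}\lambda_j=0$. Then the following are equivalent: (a) $\displaystyle\lim_{\varepsilon\to0}\frac{\ln\ln j(\varepsilon)}{\ln\ln\varepsilon^{-1}}=0$; (b) $\displaystyle\lim_{j\to\infty}\frac{\ln(\ln\frac1{\lambda_j})}{\ln(\ln j)}=\infty$; (c) for every $\delta>0$, $\displaystyle\lim_{\varepsilon\to0}\frac{\ln j(\varepsilon)}{(\ln\varepsilon^{-1})^{\delta}}=0$.
   Context: For $\varepsilon\in(0,1)$, $j(\varepsilon)=\max\{j\in\mathbb N:\lambda_j>\varepsilon^2\}$. If $\lambda_j=0$, $\ln\frac1{\lambda_j}$ is interpreted as $\infty$. *)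

theory Defs
  imports "HOL-Analysis.Analysis"
begin

definition jeps :: "(nat \<Rightarrow> real) \<Rightarrow> real \<Rightarrow> nat" where
  "jeps lam \<epsilon> = Max {j. 1 \<le> j \<and> lam j > \<epsilon>\<^sup>2}"

end

theory Submission
  imports Defs "HOL-Real_Asymp.Real_Asymp"
begin

lemma jeps_props:
  fixes lam :: "nat \<Rightarrow> real"
  assumes one: "lam 1 = 1" and lim: "lam \<longlonglongrightarrow> 0" and e: "0 < e" "e < 1"
  shows "1 \<le> jeps lam e" "lam (jeps lam e) > e\<^sup>2"
    "\<And>j. 1 \<le> j \<Longrightarrow> lam j > e\<^sup>2 \<Longrightarrow> j \<le> jeps lam e"
proof -
  define S where "S = {j. 1 \<le> j \<and> lam j > e\<^sup>2}"
  have "e\<^sup>2 > 0" using e by simp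
  then obtain N where N: "\<And>n. n \<ge> N \<Longrightarrow> \<bar>lam n\<bar> < e\<^sup>2"
    using lim unfolding LIMSEQ_def dist_real_def by fastforce
  have fin: "finite S"
  proof (rule finite_subset)
    show "S \<subseteq> {..<N}"
    proof
      fix j assume "j \<in> S"
      hence "lam j > e\<^sup>2" by (simp add: S_def)
      show "j \<in> {..<N}"
      proof (rule ccontr)
        assume "j \<notin> {..<N}"
        hence "\<bar>lam j\<bar> < e\<^sup>2" using N by simp
        thus False using \<open>lam j > e\<^sup>2\<close> by linarith
      qed
    qed
  qed simp
  have "e\<^sup>2 < 1" using e by (simp add: power_less_one_iff)
  hence "1 \<in> S" using one by (simp add: S_def)
  hence ne: "S \<noteq> {}" by blast
  have "jeps lam e \<in> S" unfolding jeps_def S_def[symmetric] using Max_in[OF fin ne] .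
  thus "1 \<le> jeps lam e" "lam (jeps lam e) > e\<^sup>2" by (auto simp: S_def)
  show "\<And>j. 1 \<le> j \<Longrightarrow> lam j > e\<^sup>2 \<Longrightarrow> j \<le> jeps lam e"
    unfolding jeps_def S_def[symmetric] using fin by (auto simp: S_def)
qed

definition Aprop :: "(nat \<Rightarrow> real) \<Rightarrow> bool" where
  "Aprop lam \<longleftrightarrow> (\<forall>\<eta>>0. eventually (\<lambda>e. ln (real (jeps lam e)) \<le> ln (1/e) powr \<eta>) (at_right 0))"

lemma ev01: "eventually (\<lambda>e::real. 0 < e \<and> e < 1) (at_right 0)"
  unfolding eventually_at_right_field by (intro exI[of _ 1]) auto

lemma a_to_A:
  fixes lam :: "nat \<Rightarrow> real"
  assumes a: "((\<lambda>\<epsilon>. ln (ln (real (jeps lam \<epsilon>))) / ln (ln (1 / \<epsilon>))) \<longlongrightarrow> 0) (at_right 0)"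
  shows "Aprop lam"
  unfolding Aprop_def
proof (intro allI impI)
  fix \<eta> :: real assume "\<eta> > 0"
  have 1: "eventually (\<lambda>e. \<bar>ln (ln (real (jeps lam e))) / ln (ln (1/e))\<bar> < \<eta>) (at_right 0)"
    using tendstoD[OF a \<open>\<eta> > 0\<close>] by (simp add: dist_real_def)
  have 2: "eventually (\<lambda>e::real. ln (ln (1/e)) > 0) (at_right 0)" by real_asymp
  have 3: "eventually (\<lambda>e::real. ln (1/e) > 0) (at_right 0)" by real_asymp
  show "eventually (\<lambda>e. ln (real (jeps lam e)) \<le> ln (1/e) powr \<eta>) (at_right 0)"
    using 1 2 3
  proof eventually_elim
    case (elim e)
    show ?case
    proof (cases "ln (real (jeps lam e)) > 0")
      case False
      then show ?thesis by (smt (verit) powr_ge_zero)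
    next
      case True
      have "ln (ln (real (jeps lam e))) / ln (ln (1/e)) < \<eta>" using elim by linarith
      hence "ln (ln (real (jeps lam e))) < \<eta> * ln (ln (1/e))"
        using elim by (simp add: pos_divide_less_eq)
      hence "exp (ln (ln (real (jeps lam e)))) < exp (\<eta> * ln (ln (1/e)))" by simp
      thus ?thesis using True elim by (simp add: powr_def)
    qed
  qed
qed

lemma A_to_a:
  fixes lam :: "nat \<Rightarrow> real"
  assumes one: "lam 1 = 1" and lim: "lam \<longlonglongrightarrow> 0" and A: "Aprop lam"
  shows "((\<lambda>\<epsilon>. ln (ln (real (jeps lam \<epsilon>))) / ln (ln (1 / \<epsilon>))) \<longlongrightarrow> 0) (at_right 0)"
proof (rule tendstoI)
  fix r :: real assume r: "r > 0"
  define C where "C = \<bar>ln (ln (2::real))\<bar>"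
  have 1: "eventually (\<lambda>e. ln (real (jeps lam e)) \<le> ln (1/e) powr (r/2)) (at_right 0)"
    using A r unfolding Aprop_def by simp
  have 2: "eventually (\<lambda>e::real. ln (ln (1/e)) > C / r) (at_right 0)" by real_asymp
  have 3: "eventually (\<lambda>e::real. ln (ln (1/e)) > 0) (at_right 0)" by real_asymp
  have 4: "eventually (\<lambda>e::real. ln (1/e) > 0) (at_right 0)" by real_asymp
  show "eventually (\<lambda>e. dist (ln (ln (real (jeps lam e))) / ln (ln (1 / e))) 0 < r) (at_right 0)"
    using 1 2 3 4 ev01
  proof eventually_elim
    case (elim e)
    define J where "J = real (jeps lam e)"
    define D where "D = ln (ln (1 / e))"
    have J1: "J \<ge> 1" using jeps_props(1)[OF one lim] elim unfolding J_def by simp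
    have "C / r * r < D * r" using elim r unfolding D_def by (intro mult_strict_right_mono) auto
    hence CD: "C < r * D" using r by (simp add: mult.commute)
    have low: "ln (ln J) \<ge> - C"
    proof (cases "J = 1")
      case True thus ?thesis by (simp add: C_def)
    next
      case False
      hence "jeps lam e \<noteq> 1" unfolding J_def by simp
      moreover have "jeps lam e \<ge> 1" using jeps_props(1)[OF one lim] elim by simp
      ultimately have "jeps lam e \<ge> 2" by linarith
      hence "J \<ge> 2" unfolding J_def by simp
      hence "ln J \<ge> ln 2" by simp
      moreover have "ln (2::real) > 0" by simp
      ultimately have "ln (ln J) \<ge> ln (ln 2)" by (metis ln_le_cancel_iff order_less_le_trans)
      thus ?thesis unfolding C_def by linarith
    qed
    have up: "ln (ln J) < r * D"
    proof (cases "ln J > 0")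
      case False
      hence "ln J = 0" using J1 by (smt (verit) ln_ge_zero)
      thus ?thesis using elim r D_def by simp
    next
      case True
      have lj: "ln J \<le> ln (1/e) powr (r/2)" using elim J_def by simp
      hence "ln (ln J) \<le> ln (ln (1/e) powr (r/2))" using True by (meson ln_le_cancel_iff less_le_trans)
      also have "\<dots> = r/2 * D" using elim unfolding D_def by (simp add: ln_powr)
      also have "\<dots> < r * D" using elim r unfolding D_def by simp
      finally show ?thesis .
    qed
    have "\<bar>ln (ln J)\<bar> < r * D" using low up CD by linarith
    hence "\<bar>ln (ln J)\<bar> / D < r" using elim D_def by (simp add: pos_divide_less_eq mult.commute)
    thus ?case using elim unfolding J_def D_def dist_real_def by (simp add: abs_divide)
  qed
qed

lemma c_to_A:
  fixes lam :: "nat \<Rightarrow> real"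
  assumes c: "\<forall>\<delta>::real. \<delta> > 0 \<longrightarrow>
           ((\<lambda>\<epsilon>. ln (real (jeps lam \<epsilon>)) / (ln (1 / \<epsilon>)) powr \<delta>) \<longlongrightarrow> 0) (at_right 0)"
  shows "Aprop lam"
  unfolding Aprop_def
proof (intro allI impI)
  fix \<eta> :: real assume "\<eta> > 0"
  have 1: "eventually (\<lambda>e. \<bar>ln (real (jeps lam e)) / ln (1/e) powr \<eta>\<bar> < 1) (at_right 0)"
    using tendstoD[OF c[rule_format, OF \<open>\<eta> > 0\<close>], of 1] by (simp add: dist_real_def)
  have 3: "eventually (\<lambda>e::real. ln (1/e) > 0) (at_right 0)" by real_asymp
  show "eventually (\<lambda>e. ln (real (jeps lam e)) \<le> ln (1/e) powr \<eta>) (at_right 0)"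
    using 1 3
  proof eventually_elim
    case (elim e)
    have p: "ln (1/e) powr \<eta> > 0" using elim by simp
    have "ln (real (jeps lam e)) / ln (1/e) powr \<eta> < 1" using elim by linarith
    thus ?case using p by (simp add: pos_divide_less_eq)
  qed
qed

lemma A_to_c:
  fixes lam :: "nat \<Rightarrow> real"
  assumes one: "lam 1 = 1" and lim: "lam \<longlonglongrightarrow> 0" and A: "Aprop lam"
  shows "\<forall>\<delta>::real. \<delta> > 0 \<longrightarrow>
           ((\<lambda>\<epsilon>. ln (real (jeps lam \<epsilon>)) / (ln (1 / \<epsilon>)) powr \<delta>) \<longlongrightarrow> 0) (at_right 0)"
proof (intro allI impI tendstoI)
  fix \<delta> r :: real assume d: "\<delta> > 0" and r: "r > 0"
  have 1: "eventually (\<lambda>e. ln (real (jeps lam e)) \<le> ln (1/e) powr (\<delta>/2)) (at_right 0)"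
    using A d unfolding Aprop_def by simp
  have 2: "eventually (\<lambda>e::real. ln (1/e) powr (\<delta>/2) > 1/r) (at_right 0)" using d by real_asymp
  have 4: "eventually (\<lambda>e::real. ln (1/e) > 0) (at_right 0)" by real_asymp
  show "eventually (\<lambda>e. dist (ln (real (jeps lam e)) / ln (1 / e) powr \<delta>) 0 < r) (at_right 0)"
    using 1 2 4 ev01
  proof eventually_elim
    case (elim e)
    define P where "P = ln (1/e) powr (\<delta>/2)"
    define X where "X = ln (real (jeps lam e))"
    have P0: "P > 0" using elim unfolding P_def by simp
    have PP: "ln (1/e) powr \<delta> = P * P" unfolding P_def by (simp add: powr_add[symmetric])
    have X0: "X \<ge> 0" unfolding X_def using jeps_props(1)[OF one lim] elim by simp
    have XP: "X \<le> P" using elim unfolding X_def P_def by simp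
    have "X / (P * P) \<le> P / (P * P)" using XP P0 by (intro divide_right_mono) auto
    also have "\<dots> = 1 / P" using P0 by simp
    also have "\<dots> < r" using elim P0 r unfolding P_def by (simp add: divide_less_eq mult.commute)
    finally have "X / (P * P) < r" .
    thus ?case using X0 P0 unfolding dist_real_def PP[symmetric] X_def by simp
  qed
qed

lemma b_to_A:
  fixes lam :: "nat \<Rightarrow> real"
  assumes one: "lam 1 = 1" and lim: "lam \<longlonglongrightarrow> 0"
    and b: "\<forall>M::real. \<forall>\<^sub>F j in sequentially. lam j = 0 \<or> ln (ln (1 / lam j)) / ln (ln (real j)) > M"
  shows "Aprop lam"
  unfolding Aprop_def
proof (intro allI impI)
  fix \<eta> :: real assume eta: "\<eta> > 0"
  define M where "M = 2 / \<eta>"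
  have "exp (-1) > (0::real)" by simp
  hence ev2: "\<forall>\<^sub>F j in sequentially. \<bar>lam j\<bar> < exp (-1)"
    using tendstoD[OF lim \<open>exp (-1) > 0\<close>] by (simp add: dist_real_def)
  have ev3: "\<forall>\<^sub>F j in sequentially. j \<ge> (4::nat)" by (rule eventually_ge_at_top)
  have "\<forall>\<^sub>F j in sequentially. (lam j = 0 \<or> ln (ln (1 / lam j)) / ln (ln (real j)) > M) \<and> \<bar>lam j\<bar> < exp (-1) \<and> j \<ge> 4"
    using b[rule_format, of M] ev2 ev3 by eventually_elim blast
  then obtain N where N: "\<And>j. j \<ge> N \<Longrightarrow> (lam j = 0 \<or> ln (ln (1 / lam j)) / ln (ln (real j)) > M) \<and> \<bar>lam j\<bar> < exp (-1) \<and> j \<ge> 4"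
    unfolding eventually_sequentially by blast
  have "\<And>K. eventually (\<lambda>e::real. ln (1/e) powr \<eta> > K) (at_right 0)" using eta by real_asymp
  hence e1: "eventually (\<lambda>e::real. ln (1/e) powr \<eta> > ln (real N)) (at_right 0)" .
  have e2: "eventually (\<lambda>e::real. ln (1/e) \<ge> 2) (at_right 0)" by real_asymp
  show "eventually (\<lambda>e. ln (real (jeps lam e)) \<le> ln (1/e) powr \<eta>) (at_right 0)"
    using e1 e2 ev01
  proof eventually_elim
    case (elim e)
    define j where "j = jeps lam e"
    define L where "L = ln (1/e)"
    have L2: "L \<ge> 2" using elim L_def by simp
    have j1: "j \<ge> 1" using jeps_props(1)[OF one lim] elim unfolding j_def by blast
    have lj: "lam j > e\<^sup>2" using jeps_props(2)[OF one lim] elim unfolding j_def by blast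
    show ?case
    proof (cases "j < N")
      case True
      have "ln (real j) \<le> ln (real N)" using j1 True by simp
      thus ?thesis using elim unfolding j_def by linarith
    next
      case False
      hence Nj: "(lam j = 0 \<or> ln (ln (1 / lam j)) / ln (ln (real j)) > M) \<and> \<bar>lam j\<bar> < exp (-1) \<and> j \<ge> 4"
        using N by simp
      have e2p: "e\<^sup>2 > 0" using elim by simp
      have lp: "lam j > 0" using lj e2p by linarith
      define K where "K = ln (1 / lam j)"
      have "real j \<ge> 4" using Nj by simp
      hence "exp 1 < real j" using exp_le by linarith
      hence lnj1: "ln (real j) > 1" using ln_less_cancel_iff[of "exp 1" "real j"] j1 by simp
      have llj: "ln (ln (real j)) > 0" using lnj1 by simp
      have r: "ln K / ln (ln (real j)) > M" using Nj lp unfolding K_def by auto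
      hence r2: "M * ln (ln (real j)) < ln K" using llj by (simp add: pos_less_divide_eq)
      have "lam j < exp (-1)" using Nj by linarith
      hence "1 / lam j > 1 / exp (-1)" using lp by (simp add: divide_strict_left_mono)
      hence "1 / lam j > exp 1" by (simp add: exp_minus divide_inverse)
      hence K1: "K > 1" unfolding K_def using ln_less_cancel_iff[of "exp 1" "1 / lam j"] lp by simp
      have pp: "0 < lam j * e\<^sup>2" using lp e2p by (rule mult_pos_pos)
      have "1 / lam j < 1 / e\<^sup>2" using lj pp by (intro divide_strict_left_mono) auto
      hence "K < ln (1 / e\<^sup>2)" unfolding K_def using lp by (subst ln_less_cancel_iff) auto
      also have "ln (1 / e\<^sup>2) = 2 * L" unfolding L_def using elim
        by (simp add: ln_div ln_realpow)
      finally have K2: "K < 2 * L" .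
      have "(\<eta>/2) * (M * ln (ln (real j))) < (\<eta>/2) * ln K" using r2 eta by simp
      hence "ln (ln (real j)) < (\<eta>/2) * ln K" using eta unfolding M_def by simp
      hence "exp (ln (ln (real j))) < exp ((\<eta>/2) * ln K)" by simp
      hence "ln (real j) < exp ((\<eta>/2) * ln K)" using lnj1 by simp
      also have "\<dots> = K powr (\<eta>/2)" using K1 by (simp add: powr_def)
      also have "\<dots> \<le> (2*L) powr (\<eta>/2)" using K1 K2 eta by (intro powr_mono2) auto
      also have "\<dots> \<le> (L*L) powr (\<eta>/2)" using L2 eta by (intro powr_mono2) auto
      also have "\<dots> = L powr (\<eta>/2) * L powr (\<eta>/2)" using L2 by (simp add: powr_mult)
      also have "\<dots> = L powr (\<eta>/2 + \<eta>/2)" by (simp only: powr_add)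
      also have "\<dots> = L powr \<eta>" by simp
      finally show ?thesis unfolding j_def L_def by simp
    qed
  qed
qed

lemma A_to_b:
  fixes lam :: "nat \<Rightarrow> real"
  assumes nonneg: "\<And>j. 1 \<le> j \<Longrightarrow> 0 \<le> lam j" and one: "lam 1 = 1"
    and lim: "lam \<longlonglongrightarrow> 0" and A: "Aprop lam"
  shows "\<forall>M::real. \<forall>\<^sub>F j in sequentially. lam j = 0 \<or> ln (ln (1 / lam j)) / ln (ln (real j)) > M"
proof
  fix M :: real
  define M' where "M' = max M 1"
  have M'1: "M' \<ge> 1" "M' \<ge> M" unfolding M'_def by auto
  define \<eta> where "\<eta> = 1 / (2 * M')"
  have eta: "\<eta> > 0" using M'1 unfolding \<eta>_def by simp
  have "eventually (\<lambda>e. ln (real (jeps lam e)) \<le> ln (1/e) powr \<eta>) (at_right 0)"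
    using A eta unfolding Aprop_def by blast
  then obtain b where b: "b > 0" "\<And>e. e > 0 \<Longrightarrow> e < b \<Longrightarrow> ln (real (jeps lam e)) \<le> ln (1/e) powr \<eta>"
    unfolding eventually_at_right_field by auto
  have mb: "min (b\<^sup>2) (1/2) > 0" using b by simp
  have ev2: "\<forall>\<^sub>F j in sequentially. \<bar>lam j\<bar> < min (b\<^sup>2) (1/2)"
    using tendstoD[OF lim mb] by (simp only: dist_real_def diff_0_right)
  have ev3: "\<forall>\<^sub>F j in sequentially. j \<ge> (4::nat)" by (rule eventually_ge_at_top)
  show "\<forall>\<^sub>F j in sequentially. lam j = 0 \<or> ln (ln (1 / lam j)) / ln (ln (real j)) > M"
    using ev2 ev3
  proof eventually_elim
    case (elim j)
    show ?case
    proof (cases "lam j = 0")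
      case True thus ?thesis by simp
    next
      case False
      have "0 \<le> lam j" using nonneg[of j] elim by simp
      hence lp: "lam j > 0" using False by simp
      have lb: "lam j < b\<^sup>2" and lh: "lam j < 1/2" using elim lp by auto
      define e where "e = sqrt (lam j / 2)"
      have e0: "e > 0" using lp unfolding e_def by simp
      have e2: "e\<^sup>2 = lam j / 2" using lp unfolding e_def by simp
      have "e\<^sup>2 < b\<^sup>2" using e2 lb lp by simp
      hence eb: "e < b" using power_less_imp_less_base[of e 2 b] b(1) by auto
      have "e\<^sup>2 < 1\<^sup>2" using e2 lh by simp
      hence e1: "e < 1" using power_less_imp_less_base[of e 2 1] by auto
      have ltj: "lam j > e\<^sup>2" using e2 lp by simp
      have "j \<le> jeps lam e" using jeps_props(3)[OF one lim e0 e1, of j] elim ltj by simp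
      hence jJ: "ln (real j) \<le> ln (real (jeps lam e))" using elim by simp
      define K where "K = ln (1 / lam j)"
      define L where "L = ln (1/e)"
      have f1: "ln e = ln (lam j / 2) / 2" unfolding e_def using lp by (simp add: ln_sqrt)
      have f2: "ln (lam j / 2) = ln (lam j) - ln 2" using lp by (simp add: ln_div)
      have f3: "K = - ln (lam j)" unfolding K_def using lp by (simp add: ln_div)
      have f4: "L = - ln e" unfolding L_def using e0 by (simp add: ln_div)
      have Lform: "L = (ln 2 + K) / 2" unfolding f4 f1 f2 f3 by (simp add: field_simps)
      have "2 \<le> 1 / lam j" using lh lp by (simp add: field_simps)
      hence K2: "ln 2 \<le> K" unfolding K_def using lp by (subst ln_le_cancel_iff) auto
      have "ln (2::real) > 0" by simp
      hence K0: "K > 0" using K2 by linarith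
      have LK: "L \<le> K" using Lform K2 by simp
      have L0: "L > 0" using e0 e1 L_def by simp
      have "ln (real j) \<le> L powr \<eta>" using jJ b(2)[OF e0 eb] L_def by simp
      also have "\<dots> \<le> K powr \<eta>" using L0 LK eta by (intro powr_mono2) auto
      finally have jK: "ln (real j) \<le> K powr \<eta>" .
      have j4: "real j \<ge> 4" using elim by simp
      hence "exp 1 < real j" using exp_le by linarith
      hence lnj1: "ln (real j) > 1" using ln_less_cancel_iff[of "exp 1" "real j"] j4 by simp
      have llj: "ln (ln (real j)) > 0" using lnj1 by simp
      have "ln (ln (real j)) \<le> ln (K powr \<eta>)" using lnj1 jK K0
        by (subst ln_le_cancel_iff) auto
      also have "\<dots> = \<eta> * ln K" using K0 by simp
      finally have "ln (ln (real j)) \<le> \<eta> * ln K" .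
      hence "2 * M' * ln (ln (real j)) \<le> ln K" using M'1 unfolding \<eta>_def by (simp add: field_simps)
      moreover have "M * ln (ln (real j)) \<le> M' * ln (ln (real j))"
        using M'1 llj by (intro mult_right_mono) auto
      moreover have "M' * ln (ln (real j)) < 2 * M' * ln (ln (real j))"
        using M'1 llj by simp
      ultimately have "M * ln (ln (real j)) < ln K" by linarith
      hence "ln K / ln (ln (real j)) > M" using llj by (simp add: pos_less_divide_eq)
      thus ?thesis unfolding K_def by simp
    qed
  qed
qed

theorem lemma2:
  fixes lam :: "nat \<Rightarrow> real"
  assumes nonneg: "\<And>j. 1 \<le> j \<Longrightarrow> 0 \<le> lam j"
    and noninc: "\<And>i j. 1 \<le> i \<Longrightarrow> i \<le> j \<Longrightarrow> lam j \<le> lam i"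
    and one: "lam 1 = 1"
    and lim: "lam \<longlonglongrightarrow> 0"
  shows "((((\<lambda>\<epsilon>. ln (ln (real (jeps lam \<epsilon>))) / ln (ln (1 / \<epsilon>))) \<longlongrightarrow> 0) (at_right 0))
     \<longleftrightarrow> (\<forall>M::real. \<forall>\<^sub>F j in sequentially.
              lam j = 0 \<or> ln (ln (1 / lam j)) / ln (ln (real j)) > M))
     \<and> ((\<forall>M::real. \<forall>\<^sub>F j in sequentially.
              lam j = 0 \<or> ln (ln (1 / lam j)) / ln (ln (real j)) > M)
     \<longleftrightarrow> (\<forall>\<delta>::real. \<delta> > 0 \<longrightarrow>
           ((\<lambda>\<epsilon>. ln (real (jeps lam \<epsilon>)) / (ln (1 / \<epsilon>)) powr \<delta>) \<longlongrightarrow> 0) (at_right 0)))"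
  apply (intro conjI iffI)
     apply (rule A_to_b, simp add: nonneg, rule one, rule lim, erule a_to_A)
    apply (rule A_to_a[OF one lim], erule b_to_A[OF one lim])
   apply (rule A_to_c[OF one lim], erule b_to_A[OF one lim])
  apply (rule A_to_b, simp add: nonneg, rule one, rule lim, erule c_to_A)
  done

end
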